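(* Let $T:S_n\to GL(d,\mathbb{C})$ be a representation with character $\chi$, and let $\sigma,\tau\in S_n$ both have the same prime order $p$. Then $T(\sigma)$ and $T(\tau)$ are similar if and only if $\chi(\sigma)=\chi(\tau)$. *)

theory Defs
  imports "HOL-Algebra.Sym_Groups" "HOL-Algebra.Multiplicative_Group" "Jordan_Normal_Form.Jordan_Normal_Form"
begin

definition sym_rep :: "nat \<Rightarrow> nat \<Rightarrow> ((nat \<Rightarrow> nat) \<Rightarrow> complex mat) \<Rightarrow> bool" where
  "sym_rep n d T \<longleftrightarrow>
     (\<forall>\<sigma>\<in>carrier (sym_group n). T \<sigma> \<in> carrier_mat d d \<and> invertible_mat (T \<sigma>)) \<and>
     (\<forall>\<sigma>\<in>carrier (sym_group n). \<forall>\<tau>\<in>carrier (sym_group n).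
        T (\<sigma> \<otimes>\<^bsub>sym_group n\<^esub> \<tau>) = T \<sigma> * T \<tau>)"

definition mat_trace :: "'a :: comm_monoid_add mat \<Rightarrow> 'a" where
  "mat_trace A = (\<Sum>i<dim_row A. A $$ (i, i))"

definition character :: "((nat \<Rightarrow> nat) \<Rightarrow> complex mat) \<Rightarrow> (nat \<Rightarrow> nat) \<Rightarrow> complex" where
  "character T \<sigma> = mat_trace (T \<sigma>)"

end

theory Submission
  imports Defs "HOL-Number_Theory.Cong" "HOL-Combinatorics.Permutations"
    "Jordan_Normal_Form.Jordan_Normal_Form_Existence"
begin

definition orb :: "('a \<Rightarrow> 'a) \<Rightarrow> 'a \<Rightarrow> 'a set" where
  "orb f x = range (\<lambda>j. (f ^^ j) x)"

definition rep :: "('a::linorder \<Rightarrow> 'a) \<Rightarrow> 'a \<Rightarrow> 'a" where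
  "rep f x = Min (orb f x)"

definition idx :: "('a::linorder \<Rightarrow> 'a) \<Rightarrow> 'a \<Rightarrow> nat" where
  "idx f x = (LEAST j. (f ^^ j) (rep f x) = x)"

definition cj :: "('a::linorder \<Rightarrow> 'a) \<Rightarrow> nat \<Rightarrow> 'a \<Rightarrow> 'a" where
  "cj f k x = (f ^^ (k * idx f x)) (rep f x)"

lemma funpow_mod:
  assumes "f ^^ p = id"
  shows "f ^^ m = f ^^ (m mod p)"
proof -
  have "f ^^ m = f ^^ (p * (m div p) + m mod p)" by simp
  also have "\<dots> = (f ^^ (p * (m div p))) \<circ> f ^^ (m mod p)" by (rule funpow_add)
  also have "f ^^ (p * (m div p)) = id" by (simp add: funpow_mult[symmetric] assms)
  finally show ?thesis by simp
qed

lemma funpow_apply_add: "(f ^^ (a + b)) x = (f ^^ a) ((f ^^ b) x)"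
  by (simp add: funpow_add)

lemma orb_finite:
  assumes "f ^^ p = id" "p > 0"
  shows "finite (orb f x)"
proof -
  have "orb f x \<subseteq> (\<lambda>j. (f ^^ j) x) ` {..<p}"
    unfolding orb_def using funpow_mod[OF assms(1)] assms(2)
    by (auto intro!: image_eqI[where x = "_ mod p"])
  thus ?thesis by (rule finite_subset) auto
qed

lemma orb_same:
  assumes "f ^^ p = id" "p > 0" "y \<in> orb f x"
  shows "orb f y = orb f x"
proof -
  obtain a where a: "y = (f ^^ a) x" using assms(3) unfolding orb_def by auto
  have bk: "(f ^^ (p - a mod p)) y = x"
  proof -
    have "(f ^^ (p - a mod p)) y = (f ^^ (p - a mod p + a)) x" using a by (simp add: funpow_apply_add)
    also have "f ^^ (p - a mod p + a) = f ^^ ((p - a mod p + a) mod p)" by (rule funpow_mod[OF assms(1)])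
    also have "(p - a mod p + a) mod p = 0"
    proof -
      have e: "a = p * (a div p) + a mod p" by simp
      have "a mod p < p" using assms(2) by simp
      moreover have "a mod p \<le> a" by (rule mod_less_eq_dividend)
      ultimately have "p - a mod p + a = p + (a - a mod p)" by linarith
      also have "a - a mod p = p * (a div p)" by (rule minus_mod_eq_mult_div)
      finally have "p - a mod p + a = p * Suc (a div p)" by simp
      thus ?thesis by simp
    qed
    finally show ?thesis by simp
  qed
  show ?thesis
  proof
    show "orb f y \<subseteq> orb f x"
    proof
      fix z assume "z \<in> orb f y"
      then obtain b where "z = (f ^^ b) y" unfolding orb_def by auto
      also have "\<dots> = (f ^^ (b + a)) x" using a by (simp add: funpow_apply_add)
      finally show "z \<in> orb f x" unfolding orb_def by auto
    qed
    show "orb f x \<subseteq> orb f y"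
    proof
      fix z assume "z \<in> orb f x"
      then obtain b where "z = (f ^^ b) x" unfolding orb_def by auto
      also have "\<dots> = (f ^^ b) ((f ^^ (p - a mod p)) y)" using bk by simp
      also have "\<dots> = (f ^^ (b + (p - a mod p))) y" by (simp add: funpow_apply_add)
      finally show "z \<in> orb f y" unfolding orb_def by auto
    qed
  qed
qed

lemma self_in_orb: "x \<in> orb f x"
  unfolding orb_def by (auto intro!: range_eqI[where x = 0])

lemma f_in_orb: "f x \<in> orb f x"
  unfolding orb_def by (auto intro!: range_eqI[where x = 1])

lemma rep_in_orb:
  assumes "f ^^ p = id" "p > 0"
  shows "rep f x \<in> orb f x"
  unfolding rep_def using orb_finite[OF assms] self_in_orb[of x f] by (intro Min_in) auto

lemma rep_f: assumes "f ^^ p = id" "p > 0"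
  shows "rep f (f x) = rep f x"
  unfolding rep_def using orb_same[OF assms f_in_orb, of x] by (rule arg_cong)

lemma rep_orb: assumes "f ^^ p = id" "p > 0" "y \<in> orb f x"
  shows "rep f y = rep f x"
  unfolding rep_def using orb_same[OF assms] by (rule arg_cong)

lemma idx_spec: assumes "f ^^ p = id" "p > 0"
  shows "(f ^^ idx f x) (rep f x) = x"
proof -
  have "x \<in> orb f (rep f x)" using orb_same[OF assms rep_in_orb[OF assms]] self_in_orb[of x f] by simp
  then obtain j where "x = (f ^^ j) (rep f x)" unfolding orb_def by auto
  hence "(f ^^ j) (rep f x) = x" by (rule sym)
  thus ?thesis unfolding idx_def by (rule LeastI)
qed

lemma funpow_scale:
  fixes f :: "'a \<Rightarrow> 'a"
  assumes "(f ^^ a) r = (f ^^ b) r"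
  shows "(f ^^ (c * a)) r = (f ^^ (c * b)) r"
proof (induction c)
  case (Suc c)
  have "(f ^^ (Suc c * a)) r = (f ^^ a) ((f ^^ (c * a)) r)" by (simp add: funpow_apply_add[symmetric])
  also have "\<dots> = (f ^^ a) ((f ^^ (c * b)) r)" using Suc by simp
  also have "\<dots> = (f ^^ (c * b)) ((f ^^ a) r)" by (simp add: funpow_apply_add[symmetric] add.commute)
  also have "\<dots> = (f ^^ (c * b)) ((f ^^ b) r)" using assms by simp
  also have "\<dots> = (f ^^ (Suc c * b)) r" by (simp add: funpow_apply_add[symmetric] add.commute)
  finally show ?case .
qed simp

lemma cj_comm: assumes "f ^^ p = id" "p > 0"
  shows "cj f k (f x) = (f ^^ k) (cj f k x)"
proof -
  let ?r = "rep f x"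
  have r: "rep f (f x) = ?r" by (rule rep_f[OF assms])
  have "(f ^^ idx f (f x)) ?r = f x" using idx_spec[OF assms, of "f x"] r by simp
  also have "\<dots> = (f ^^ Suc (idx f x)) ?r" using idx_spec[OF assms, of x] by simp
  finally have "(f ^^ (k * idx f (f x))) ?r = (f ^^ (k * Suc (idx f x))) ?r" by (rule funpow_scale)
  thus ?thesis unfolding cj_def r by (simp add: funpow_apply_add[symmetric])
qed

lemma cj_orb: "cj f k x \<in> orb f (rep f x)"
  unfolding cj_def orb_def by auto

lemma cj_inv: assumes "f ^^ p = id" "p > 0" "[k * k' = 1] (mod p)"
  shows "cj f k' (cj f k x) = x"
proof -
  let ?r = "rep f x" let ?i = "idx f x" let ?y = "cj f k x"
  have rx: "?r \<in> orb f x" by (rule rep_in_orb[OF assms(1,2)])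
  have "?y \<in> orb f x" using cj_orb[of f k x] orb_same[OF assms(1,2) rx] by simp
  hence ry: "rep f ?y = ?r" by (rule rep_orb[OF assms(1,2)])
  have "(f ^^ idx f ?y) ?r = ?y" using idx_spec[OF assms(1,2), of ?y] ry by simp
  also have "\<dots> = (f ^^ (k * ?i)) ?r" unfolding cj_def ..
  finally have "(f ^^ (k' * idx f ?y)) ?r = (f ^^ (k' * (k * ?i))) ?r" by (rule funpow_scale)
  also have "f ^^ (k' * (k * ?i)) = f ^^ ((k' * (k * ?i)) mod p)" by (rule funpow_mod[OF assms(1)])
  also have "(k' * (k * ?i)) mod p = ?i mod p"
  proof -
    have c: "[k * k' * ?i = 1 * ?i] (mod p)" by (rule cong_scalar_right[OF assms(3)])
    have e: "k' * (k * ?i) = k * k' * ?i" by (simp only: ac_simps)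
    show ?thesis unfolding e using c unfolding cong_def by simp
  qed
  also have "f ^^ (?i mod p) = f ^^ ?i" by (rule funpow_mod[OF assms(1), symmetric])
  finally show ?thesis unfolding cj_def[of f k' ?y] ry using idx_spec[OF assms(1,2), of x] by simp
qed

lemma cj_fix: fixes f :: "'a::linorder \<Rightarrow> 'a" assumes "f x = x"
  shows "cj f k x = x"
proof -
  have fx: "(f ^^ j) x = x" for j by (induction j) (simp_all add: assms)
  have "orb f x = {x}" unfolding orb_def using fx by auto
  hence "rep f x = x" unfolding rep_def by simp
  thus ?thesis unfolding cj_def using fx by simp
qed

lemma conj_power_exists:
  fixes f :: "'a::linorder \<Rightarrow> 'a"
  assumes perm: "f permutes S" and fp: "f ^^ p = id" and p: "p > 0" and cop: "coprime k p"
  shows "\<exists>\<pi>. \<pi> permutes S \<and> \<pi> \<circ> f = (f ^^ k) \<circ> \<pi>"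
proof -
  obtain k' where k': "[k * k' = Suc 0] (mod p)" using cong_solve_coprime_nat[OF cop] by auto
  have k'2: "[k' * k = 1] (mod p)" using k' by (simp add: mult.commute)
  have inv1: "cj f k' (cj f k x) = x" for x using cj_inv[OF fp p] k' by simp
  have inv2: "cj f k (cj f k' x) = x" for x using cj_inv[OF fp p k'2] .
  have "cj f k permutes S" unfolding permutes_def
  proof (intro conjI allI impI)
    fix x assume "x \<notin> S" then have "f x = x" using perm by (simp add: permutes_def)
    thus "cj f k x = x" by (rule cj_fix)
  next
    fix y show "\<exists>!x. cj f k x = y"
    proof (rule ex1I[of _ "cj f k' y"])
      show "cj f k (cj f k' y) = y" by (rule inv2)
      fix x assume "cj f k x = y"
      thus "x = cj f k' y" using inv1[of x] by simp
    qed
  qed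
  moreover have "cj f k \<circ> f = (f ^^ k) \<circ> cj f k" using cj_comm[OF fp p] by auto
  ultimately show ?thesis by blast
qed

definition dmat :: "complex list \<Rightarrow> complex mat" where
  "dmat as = mat (length as) (length as) (\<lambda>(i,j). if i = j then as ! i else 0)"

lemma dmat_carrier[simp]: "dmat as \<in> carrier_mat (length as) (length as)"
  and dmat_dims[simp]: "dim_row (dmat as) = length as" "dim_col (dmat as) = length as"
  unfolding dmat_def by auto

lemma dmat_index[simp]: "i < length as \<Longrightarrow> j < length as \<Longrightarrow> dmat as $$ (i,j) = (if i = j then as ! i else 0)"
  unfolding dmat_def by auto

lemma jordan_matrix_ones: "jordan_matrix (map (\<lambda>a. (1,a)) as) = dmat as"
proof (induction as)
  case Nil
  show ?case unfolding jordan_matrix_def dmat_def by (intro eq_matI) auto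
next
  case (Cons a as)
  have s: "sum_list (map fst (map (\<lambda>a. (1::nat, a)) as)) = length as"
    by (induction as) auto
  show ?case
    unfolding list.map(2) jordan_matrix_Cons s Cons
  proof (intro eq_matI)
    fix i j assume ij: "i < dim_row (dmat (a # as))" "j < dim_col (dmat (a # as))"
    hence ij': "i < 1 + length as" "j < 1 + length as" by auto
    show "four_block_mat (jordan_block 1 a) (0\<^sub>m 1 (length as)) (0\<^sub>m (length as) 1) (dmat as) $$ (i, j) =
          dmat (a # as) $$ (i, j)"
      using ij' by (cases i; cases j) auto
  qed auto
qed

lemma dmat_mult: assumes "length xs = length ys"
  shows "dmat xs * dmat ys = dmat (map2 (*) xs ys)"
proof (intro eq_matI)
  fix i j assume ij: "i < dim_row (dmat (map2 (*) xs ys))" "j < dim_col (dmat (map2 (*) xs ys))"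
  let ?n = "length ys"
  have "(dmat xs * dmat ys) $$ (i,j) = (\<Sum>l\<in>{0..<?n}. dmat xs $$ (i,l) * dmat ys $$ (l,j))"
    using ij assms by (simp add: scalar_prod_def)
  also have "\<dots> = (\<Sum>l\<in>{0..<?n}. if l = i then (if i = j then xs ! i * ys ! i else 0) else 0)"
    using ij assms by (intro sum.cong) (auto simp del: dmat_index simp: dmat_def)
  also have "\<dots> = dmat (map2 (*) xs ys) $$ (i,j)" using ij assms by simp
  finally show "(dmat xs * dmat ys) $$ (i,j) = dmat (map2 (*) xs ys) $$ (i,j)" .
qed (use assms in auto)

lemma dmat_pow: "dmat as ^\<^sub>m k = dmat (map (\<lambda>a. a ^ k) as)"
proof (induction k)
  case 0
  show ?case by (intro eq_matI) auto
next
  case (Suc k)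
  have "dmat as ^\<^sub>m Suc k = dmat (map (\<lambda>a. a ^ k) as) * dmat as" using Suc by simp
  also have "\<dots> = dmat (map2 (*) (map (\<lambda>a. a ^ k) as) as)" by (rule dmat_mult) simp
  also have "map2 (*) (map (\<lambda>a. a ^ k) as) as = map (\<lambda>a. a ^ Suc k) as"
    by (induction as) (auto simp: mult.commute)
  finally show ?case .
qed

lemma trace_dmat: "mat_trace (dmat as) = sum_list as"
  unfolding mat_trace_def by (simp add: sum_list_sum_nth atLeast0LessThan)

lemma trace_mult_comm: fixes A B :: "'a::comm_ring_1 mat" assumes "A \<in> carrier_mat n m" "B \<in> carrier_mat m n"
  shows "mat_trace (A * B) = mat_trace (B * A)"
proof -
  have "mat_trace (A * B) = (\<Sum>i<n. \<Sum>k<m. A $$ (i,k) * B $$ (k,i))"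
    unfolding mat_trace_def using assms
    by (auto simp: scalar_prod_def atLeast0LessThan intro!: sum.cong)
  also have "\<dots> = (\<Sum>k<m. \<Sum>i<n. A $$ (i,k) * B $$ (k,i))"
    by (rule sum.swap)
  also have "\<dots> = (\<Sum>k<m. \<Sum>i<n. B $$ (k,i) * A $$ (i,k))"
    by (simp add: mult.commute)
  also have "\<dots> = mat_trace (B * A)"
    unfolding mat_trace_def using assms
    by (auto simp: scalar_prod_def atLeast0LessThan intro!: sum.cong)
  finally show ?thesis .
qed

lemma trace_similar: fixes A B :: "'a::comm_ring_1 mat" assumes "similar_mat A B" shows "mat_trace A = mat_trace B"
proof -
  obtain P Q where w: "similar_mat_wit A B P Q" using assms unfolding similar_mat_def by auto
  define n where "n = dim_row A"
  note d = similar_mat_witD[OF n_def w]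
  have "mat_trace A = mat_trace ((P * B) * Q)" using d by simp
  also have "\<dots> = mat_trace (Q * (P * B))" using d by (intro trace_mult_comm) auto
  also have "Q * (P * B) = (Q * P) * B" using d by (intro assoc_mult_mat[symmetric, of _ n n _ n _ n]) auto
  also have "\<dots> = B" using d by simp
  finally show ?thesis .
qed

lemma dmat_perm_similar: assumes "mset as = mset bs" shows "similar_mat (dmat as) (dmat bs)"
proof -
  obtain f where f: "f permutes {..<length bs}" "permute_list f bs = as"
    using mset_eq_permutation[OF assms] by blast
  define n where "n = length bs"
  define g where "g = inv_into UNIV f"
  have len: "length as = n" using assms n_def by (metis size_mset)
  have fn: "i < n \<Longrightarrow> f i < n" for i using permutes_in_image[OF f(1), of i] n_def by simp
  have gn: "i < n \<Longrightarrow> g i < n" for i using permutes_in_image[OF permutes_inv[OF f(1)], of i] n_def g_def by simp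
  have fg: "f (g i) = i" for i unfolding g_def using permutes_inverses(1)[OF f(1)] .
  have gf: "g (f i) = i" for i unfolding g_def using permutes_inverses(2)[OF f(1)] .
  have asf: "i < n \<Longrightarrow> as ! i = bs ! f i" for i using permute_list_nth[OF f(1)] f(2) n_def by auto
  define P where "P = mat n n (\<lambda>(i,j). if j = f i then 1 else (0::complex))"
  define Q where "Q = mat n n (\<lambda>(i,j). if j = g i then 1 else (0::complex))"
  have P: "P \<in> carrier_mat n n" and Q: "Q \<in> carrier_mat n n" unfolding P_def Q_def by auto
  have PQ: "P * Q = 1\<^sub>m n"
  proof (intro eq_matI)
    fix i j assume ij: "i < dim_row (1\<^sub>m n)" "j < dim_col (1\<^sub>m n)"
    have "(P * Q) $$ (i,j) = (\<Sum>l\<in>{0..<n}. P $$ (i,l) * Q $$ (l,j))"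
      using ij P Q by (simp add: scalar_prod_def)
    also have "\<dots> = (\<Sum>l\<in>{0..<n}. if l = f i then (if j = g (f i) then 1 else 0) else 0)"
      using ij by (intro sum.cong) (auto simp: P_def Q_def)
    also have "\<dots> = 1\<^sub>m n $$ (i,j)" using ij fn[of i] by (simp add: gf)
    finally show "(P * Q) $$ (i,j) = 1\<^sub>m n $$ (i,j)" .
  qed (use P Q in auto)
  have QP: "Q * P = 1\<^sub>m n"
  proof (intro eq_matI)
    fix i j assume ij: "i < dim_row (1\<^sub>m n)" "j < dim_col (1\<^sub>m n)"
    have "(Q * P) $$ (i,j) = (\<Sum>l\<in>{0..<n}. Q $$ (i,l) * P $$ (l,j))"
      using ij P Q by (simp add: scalar_prod_def)
    also have "\<dots> = (\<Sum>l\<in>{0..<n}. if l = g i then (if j = f (g i) then 1 else 0) else 0)"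
      using ij by (intro sum.cong) (auto simp: P_def Q_def)
    also have "\<dots> = 1\<^sub>m n $$ (i,j)" using ij gn[of i] by (simp add: fg)
    finally show "(Q * P) $$ (i,j) = 1\<^sub>m n $$ (i,j)" .
  qed (use P Q in auto)
  have PB: "(P * dmat bs) $$ (i,l) = (if l = f i then bs ! l else 0)" if "i < n" "l < n" for i l
  proof -
    have "(P * dmat bs) $$ (i,l) = (\<Sum>k\<in>{0..<n}. P $$ (i,k) * dmat bs $$ (k,l))"
      using that P n_def by (simp add: scalar_prod_def)
    also have "\<dots> = (\<Sum>k\<in>{0..<n}. if k = f i then (if l = f i then bs ! l else 0) else 0)"
      using that n_def by (intro sum.cong) (auto simp: P_def)
    also have "\<dots> = (if l = f i then bs ! l else 0)" using that fn[of i] by simp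
    finally show ?thesis .
  qed
  have A: "dmat as = P * dmat bs * Q"
  proof (intro eq_matI)
    fix i j assume ij: "i < dim_row (P * dmat bs * Q)" "j < dim_col (P * dmat bs * Q)"
    hence ij': "i < n" "j < n" using P Q by auto
    have "(P * dmat bs * Q) $$ (i,j) = (\<Sum>l\<in>{0..<n}. (P * dmat bs) $$ (i,l) * Q $$ (l,j))"
      using ij' P Q n_def by (simp add: scalar_prod_def)
    also have "\<dots> = (\<Sum>l\<in>{0..<n}. if l = f i then (if j = g (f i) then bs ! f i else 0) else 0)"
      using ij' by (intro sum.cong) (auto simp: PB Q_def)
    also have "\<dots> = dmat as $$ (i,j)" using ij' fn[of i] len asf[of i] by (auto simp: gf)
    finally show "dmat as $$ (i,j) = (P * dmat bs * Q) $$ (i,j)" by simp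
  qed (use P Q len in auto)
  show ?thesis
    by (rule similar_matI[OF _ PQ QP A]) (use P Q len n_def in auto)
qed

lemma four_block_one_split:
  fixes X Y :: "'a :: {zero,one} mat"
  assumes X: "X \<in> carrier_mat k k" and Y: "Y \<in> carrier_mat m m"
    and e: "four_block_mat X (0\<^sub>m k m) (0\<^sub>m m k) Y = 1\<^sub>m (k + m)"
  shows "X = 1\<^sub>m k" "Y = 1\<^sub>m m"
proof -
  show "X = 1\<^sub>m k"
  proof (intro eq_matI)
    fix i j assume "i < dim_row (1\<^sub>m k)" "j < dim_col (1\<^sub>m k)"
    hence ij: "i < k" "j < k" by auto
    have "X $$ (i,j) = four_block_mat X (0\<^sub>m k m) (0\<^sub>m m k) Y $$ (i,j)" using ij X Y by simp
    also have "\<dots> = 1\<^sub>m k $$ (i,j)" unfolding e using ij by simp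
    finally show "X $$ (i,j) = 1\<^sub>m k $$ (i,j)" .
  qed (use X in auto)
  show "Y = 1\<^sub>m m"
  proof (intro eq_matI)
    fix i j assume "i < dim_row (1\<^sub>m m)" "j < dim_col (1\<^sub>m m)"
    hence ij: "i < m" "j < m" by auto
    have "Y $$ (i,j) = four_block_mat X (0\<^sub>m k m) (0\<^sub>m m k) Y $$ (i + k, j + k)" using ij X Y by simp
    also have "\<dots> = 1\<^sub>m m $$ (i,j)" unfolding e using ij by simp
    finally show "Y $$ (i,j) = 1\<^sub>m m $$ (i,j)" .
  qed (use Y in auto)
qed

lemma jordan_matrix_pow_one:
  assumes "jordan_matrix n_as ^\<^sub>m p = 1\<^sub>m (sum_list (map fst n_as))" "(n,a) \<in> set n_as"
  shows "jordan_block n (a :: 'a :: comm_ring_1) ^\<^sub>m p = 1\<^sub>m n"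
  using assms
proof (induction n_as)
  case (Cons kb rest)
  obtain k b where kb: "kb = (k,b)" by force
  let ?m = "sum_list (map fst rest)"
  have "four_block_mat (jordan_block k b ^\<^sub>m p) (0\<^sub>m k ?m) (0\<^sub>m ?m k) (jordan_matrix rest ^\<^sub>m p)
      = 1\<^sub>m (k + ?m)"
    using Cons(2) unfolding kb jordan_matrix_Cons
    by (subst (asm) pow_four_block_mat[OF jordan_block_carrier jordan_matrix_carrier]) simp
  from four_block_one_split[OF _ _ this] have
    1: "jordan_block k b ^\<^sub>m p = 1\<^sub>m k" and 2: "jordan_matrix rest ^\<^sub>m p = 1\<^sub>m ?m" by auto
  show ?case using Cons(3) 1 Cons(1)[OF 2] kb by auto
qed simp

lemma jordan_block_pow_one:
  assumes "jordan_block n (a :: complex) ^\<^sub>m p = 1\<^sub>m n" "n > 0" "p > 0"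
  shows "n = 1 \<and> a ^ p = 1"
proof -
  have e: "(jordan_block n a ^\<^sub>m p) $$ (i,j) = 1\<^sub>m n $$ (i,j)" for i j using assms(1) by simp
  have ap: "a ^ p = 1" using e[of 0 0] assms(2) by (simp add: jordan_block_pow)
  have "n = 1"
  proof (rule ccontr)
    assume "n \<noteq> 1" hence "1 < n" using assms(2) by simp
    hence "of_nat p * a ^ (p - 1) = 0" using e[of 0 1] by (simp add: jordan_block_pow)
    hence "a = 0" using assms(3) by simp
    thus False using ap assms(3) by (simp add: power_0_left)
  qed
  thus ?thesis using ap by simp
qed

lemma diag_of_pow_one:
  fixes A :: "complex mat"
  assumes A: "A \<in> carrier_mat d d" and p: "p > 0" and Ap: "A ^\<^sub>m p = 1\<^sub>m d"
  shows "\<exists>as. length as = d \<and> similar_mat A (dmat as) \<and> (\<forall>a\<in>set as. a ^ p = 1)"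
proof -
  obtain es where "char_poly A = (\<Prod>a\<leftarrow>es. [:- a, 1:])" using char_poly_factorized[OF A] by auto
  then obtain n_as where jnf: "jordan_nf A n_as" using jordan_nf_exists[OF A] by blast
  hence nz: "0 \<notin> fst ` set n_as" and sim: "similar_mat A (jordan_matrix n_as)"
    unfolding jordan_nf_def by auto
  let ?J = "jordan_matrix n_as"
  let ?m = "sum_list (map fst n_as)"
  obtain P Q where w: "similar_mat_wit A ?J P Q" using sim unfolding similar_mat_def by auto
  have dA: "d = dim_row A" using A by simp
  note wd = similar_mat_witD[OF dA w]
  have "?J \<in> carrier_mat d d" using wd by auto
  hence md: "?m = d" by (metis carrier_matD(1) jordan_matrix_dim(1))
  have "?J ^\<^sub>m p = Q * A ^\<^sub>m p * P" by (rule similar_mat_wit_pow_id[OF similar_mat_wit_sym[OF w]])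
  also have "\<dots> = Q * P" using wd Ap by simp
  also have "\<dots> = 1\<^sub>m d" using wd by simp
  finally have Jp: "?J ^\<^sub>m p = 1\<^sub>m ?m" using md by simp
  have blocks: "n = 1 \<and> a ^ p = 1" if "(n,a) \<in> set n_as" for n a
  proof -
    have "n > 0" using nz that by (metis fst_conv gr0I image_eqI)
    thus ?thesis using jordan_block_pow_one[OF jordan_matrix_pow_one[OF Jp that] _ p] by simp
  qed
  define as where "as = map snd n_as"
  have fst1: "\<forall>x\<in>set n_as. fst x = 1" using blocks by force
  have nas: "map (\<lambda>a. (1, a)) as = n_as" unfolding as_def using fst1
    by (induction n_as) auto
  have "length as = ?m" unfolding as_def using fst1
    by (induction n_as) auto
  moreover have "similar_mat A (dmat as)" using sim unfolding jordan_matrix_ones[symmetric] nas .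
  moreover have "\<forall>a\<in>set as. a ^ p = 1" unfolding as_def using blocks by force
  ultimately show ?thesis using md by auto
qed

lemma count_formula:
  fixes \<omega> :: complex
  assumes "\<forall>a\<in>set as. a ^ p = 1" "\<omega> ^ p = 1" "p > 0"
  shows "(\<Sum>j<p. (inverse \<omega>) ^ j * sum_list (map (\<lambda>a. a ^ j) as)) = of_nat p * of_nat (count (mset as) \<omega>)"
  using assms(1)
proof (induction as)
  case (Cons a as)
  have w0: "\<omega> \<noteq> 0" using assms(2,3) by (auto simp: power_0_left)
  let ?x = "a * inverse \<omega>"
  have xp: "?x ^ p = 1" using Cons(2) assms(2) by (simp add: power_mult_distrib power_inverse)
  have geo: "(\<Sum>j<p. ?x ^ j) = (if a = \<omega> then of_nat p else 0)"
  proof (cases "a = \<omega>")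
    case True thus ?thesis using w0 by simp
  next
    case False
    have "?x \<noteq> 1"
    proof
      assume "?x = 1"
      have "a = ?x * \<omega>" using w0 by (simp add: mult.assoc)
      thus False using \<open>?x = 1\<close> False by simp
    qed
    thus ?thesis using False xp by (simp add: sum_gp_strict)
  qed
  have "(\<Sum>j<p. (inverse \<omega>) ^ j * sum_list (map (\<lambda>a. a ^ j) (a # as)))
      = (\<Sum>j<p. ?x ^ j) + (\<Sum>j<p. (inverse \<omega>) ^ j * sum_list (map (\<lambda>a. a ^ j) as))"
    by (simp add: distrib_left sum.distrib power_mult_distrib mult.commute)
  also have "\<dots> = of_nat p * of_nat (count (mset (a # as)) \<omega>)"
    unfolding geo using Cons by (auto simp: algebra_simps)
  finally show ?case .
qed simp

lemma sym_pow: "x [^]\<^bsub>sym_group n\<^esub> (k::nat) = x ^^ k"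
proof (induction k)
  case 0 show ?case by (simp add: sym_group_one)
next
  case (Suc k)
  have "x [^]\<^bsub>sym_group n\<^esub> Suc k = (x ^^ k) \<circ> x" by (simp only: nat_pow_Suc sym_group_mult Suc.IH)
  also have "\<dots> = x ^^ Suc k" by (rule funpow_Suc_right[symmetric])
  finally show ?case .
qed

lemma sym_pow_carrier: "x \<in> carrier (sym_group n) \<Longrightarrow> x ^^ k \<in> carrier (sym_group n)"
  using monoid.nat_pow_closed[OF group.is_monoid[OF sym_group_is_group], of x n k] by (simp add: sym_pow)

lemma T_mult: assumes "sym_rep n d T" "x \<in> carrier (sym_group n)" "y \<in> carrier (sym_group n)"
  shows "T (x \<circ> y) = T x * T y"
  using assms unfolding sym_rep_def by (simp add: sym_group_mult)

lemma T_carrier: assumes "sym_rep n d T" "x \<in> carrier (sym_group n)"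
  shows "T x \<in> carrier_mat d d"
  using assms unfolding sym_rep_def by simp

lemma T_id: assumes rep: "sym_rep n d T" shows "T id = 1\<^sub>m d"
proof -
  have idc: "id \<in> carrier (sym_group n)" by (simp add: sym_group_carrier permutes_id)
  let ?X = "T id"
  have X: "?X \<in> carrier_mat d d" and inv: "invertible_mat ?X" using rep idc unfolding sym_rep_def by auto
  have XX: "?X = ?X * ?X" using T_mult[OF rep idc idc] by simp
  obtain B where B1: "?X * B = 1\<^sub>m d" and B2: "B * ?X = 1\<^sub>m (dim_row B)"
    using inv X unfolding invertible_mat_def inverts_mat_def by auto
  have "dim_col (?X * B) = d" unfolding B1 by simp
  hence "dim_col B = d" by simp
  moreover have "dim_col (B * ?X) = dim_row B" unfolding B2 by simp
  hence "dim_row B = d" using X by simp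
  ultimately have Bc: "B \<in> carrier_mat d d" by auto
  have "1\<^sub>m d = ?X * B" using B1 by simp
  also have "\<dots> = (?X * ?X) * B" using XX by simp
  also have "\<dots> = ?X * (?X * B)" by (rule assoc_mult_mat[OF X X Bc])
  also have "\<dots> = ?X" using B1 X by simp
  finally show ?thesis by simp
qed

lemma T_pow: assumes rep: "sym_rep n d T" and x: "x \<in> carrier (sym_group n)"
  shows "T (x ^^ k) = T x ^\<^sub>m k"
proof (induction k)
  case 0
  have "T (x ^^ 0) = T id" by (simp only: funpow.simps(1))
  also have "\<dots> = 1\<^sub>m d" by (rule T_id[OF rep])
  also have "\<dots> = T x ^\<^sub>m 0" using T_carrier[OF rep x] by simp
  finally show ?case .
next
  case (Suc k)
  have "T (x ^^ Suc k) = T (x ^^ k \<circ> x)" by (simp only: funpow_Suc_right)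
  also have "\<dots> = T (x ^^ k) * T x" by (rule T_mult[OF rep sym_pow_carrier[OF x] x])
  also have "\<dots> = T x ^\<^sub>m k * T x" by (simp only: Suc.IH)
  also have "\<dots> = T x ^\<^sub>m Suc k" by simp
  finally show ?case .
qed

lemma char_conj_pow:
  assumes rep: "sym_rep n d T" and x: "x \<in> carrier (sym_group n)"
    and xp: "x ^^ p = id" and p: "prime p" and j: "0 < j" "j < p"
  shows "character T (x ^^ j) = character T x"
proof -
  have perm: "x permutes {1..n}" using x by (simp add: sym_group_carrier)
  have "\<not> p dvd j" using j by (simp add: nat_dvd_not_less)
  with p have "coprime p j" by (rule prime_imp_coprime)
  hence cop: "coprime j p" by (simp add: coprime_commute)
  have p0: "p > 0" using p by (simp add: prime_gt_0_nat)
  obtain \<pi> where pi: "\<pi> permutes {1..n}" and comm: "\<pi> \<circ> x = (x ^^ j) \<circ> \<pi>"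
    using conj_power_exists[OF perm xp p0 cop] by blast
  define \<rho> where "\<rho> = inv_into UNIV \<pi>"
  have rho: "\<rho> permutes {1..n}" unfolding \<rho>_def by (rule permutes_inv[OF pi])
  have pr: "\<pi> \<circ> \<rho> = id" and rp: "\<rho> \<circ> \<pi> = id" unfolding \<rho>_def using permutes_inv_o[OF pi] by auto
  have pic: "\<pi> \<in> carrier (sym_group n)" and rhoc: "\<rho> \<in> carrier (sym_group n)"
    using pi rho by (auto simp: sym_group_carrier)
  have "x ^^ j = (x ^^ j) \<circ> (\<pi> \<circ> \<rho>)" using pr by simp
  also have "\<dots> = ((x ^^ j) \<circ> \<pi>) \<circ> \<rho>" by (rule o_assoc)
  also have "\<dots> = (\<pi> \<circ> x) \<circ> \<rho>" by (simp only: comm)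
  also have "\<dots> = \<pi> \<circ> (x \<circ> \<rho>)" by (rule o_assoc[symmetric])
  finally have xj: "x ^^ j = \<pi> \<circ> (x \<circ> \<rho>)" .
  have xrc: "x \<circ> \<rho> \<in> carrier (sym_group n)"
    using monoid.m_closed[OF group.is_monoid[OF sym_group_is_group] x rhoc] by (simp add: sym_group_mult)
  have Tx: "T x \<in> carrier_mat d d" and Tp: "T \<pi> \<in> carrier_mat d d" and Tr: "T \<rho> \<in> carrier_mat d d"
    using T_carrier[OF rep] x pic rhoc by auto
  have "character T (x ^^ j) = mat_trace (T \<pi> * (T x * T \<rho>))"
    unfolding character_def xj T_mult[OF rep pic xrc] T_mult[OF rep x rhoc] ..
  also have "\<dots> = mat_trace ((T x * T \<rho>) * T \<pi>)"
    using Tx Tp Tr by (intro trace_mult_comm) auto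
  also have "(T x * T \<rho>) * T \<pi> = T x * (T \<rho> * T \<pi>)" by (rule assoc_mult_mat[OF Tx Tr Tp])
  also have "T \<rho> * T \<pi> = 1\<^sub>m d" using T_mult[OF rep rhoc pic] rp T_id[OF rep] by simp
  also have "T x * 1\<^sub>m d = T x" using Tx by simp
  finally show ?thesis unfolding character_def .
qed

lemma ord_pow_id: assumes "x \<in> carrier (sym_group n)" "group.ord (sym_group n) x = p"
  shows "x ^^ p = id"
proof -
  have "x [^]\<^bsub>sym_group n\<^esub> p = \<one>\<^bsub>sym_group n\<^esub>"
    using group.pow_eq_id[OF sym_group_is_group assms(1)] assms(2) by simp
  thus ?thesis by (simp add: sym_pow sym_group_one)
qed

theorem corollary3p4:
  fixes n d p :: nat and T :: "(nat \<Rightarrow> nat) \<Rightarrow> complex mat" and \<sigma> \<tau> :: "nat \<Rightarrow> nat"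
  assumes "sym_rep n d T"
    and "\<sigma> \<in> carrier (sym_group n)" and "\<tau> \<in> carrier (sym_group n)"
    and "prime p"
    and "group.ord (sym_group n) \<sigma> = p" and "group.ord (sym_group n) \<tau> = p"
  shows "similar_mat (T \<sigma>) (T \<tau>) \<longleftrightarrow> character T \<sigma> = character T \<tau>"
proof
  assume "similar_mat (T \<sigma>) (T \<tau>)"
  thus "character T \<sigma> = character T \<tau>" unfolding character_def by (rule trace_similar)
next
  assume chi: "character T \<sigma> = character T \<tau>"
  note rep = assms(1)
  have p0: "p > 0" using assms(4) by (simp add: prime_gt_0_nat)
  have sp: "\<sigma> ^^ p = id" by (rule ord_pow_id[OF assms(2,5)])
  have tp: "\<tau> ^^ p = id" by (rule ord_pow_id[OF assms(3,6)])
  have A: "T \<sigma> \<in> carrier_mat d d" and B: "T \<tau> \<in> carrier_mat d d"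
    using T_carrier[OF rep] assms(2,3) by auto
  have Ap: "T \<sigma> ^\<^sub>m p = 1\<^sub>m d" using T_pow[OF rep assms(2), of p] sp T_id[OF rep] by simp
  have Bp: "T \<tau> ^\<^sub>m p = 1\<^sub>m d" using T_pow[OF rep assms(3), of p] tp T_id[OF rep] by simp
  obtain as where as: "length as = d" "similar_mat (T \<sigma>) (dmat as)" "\<forall>a\<in>set as. a ^ p = 1"
    using diag_of_pow_one[OF A p0 Ap] by blast
  obtain bs where bs: "length bs = d" "similar_mat (T \<tau>) (dmat bs)" "\<forall>a\<in>set bs. a ^ p = 1"
    using diag_of_pow_one[OF B p0 Bp] by blast
  have tr_pow: "mat_trace (M ^\<^sub>m j) = sum_list (map (\<lambda>a. a ^ j) cs)"
    if sm: "similar_mat M (dmat cs)" for M cs j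
  proof -
    obtain P Q where "similar_mat_wit M (dmat cs) P Q" using sm unfolding similar_mat_def by auto
    hence "similar_mat (M ^\<^sub>m j) (dmat cs ^\<^sub>m j)"
      unfolding similar_mat_def by (blast intro: similar_mat_wit_pow)
    hence "mat_trace (M ^\<^sub>m j) = mat_trace (dmat cs ^\<^sub>m j)" by (rule trace_similar)
    thus ?thesis by (simp add: dmat_pow trace_dmat)
  qed
  have eq_pow: "sum_list (map (\<lambda>a. a ^ j) as) = sum_list (map (\<lambda>a. a ^ j) bs)" if "j < p" for j
  proof (cases "j = 0")
    case True
    thus ?thesis using as(1) bs(1) by (simp add: sum_list_triv)
  next
    case False
    have "mat_trace (T \<sigma> ^\<^sub>m j) = character T (\<sigma> ^^ j)"
      unfolding character_def T_pow[OF rep assms(2)] ..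
    also have "\<dots> = character T \<sigma>" using char_conj_pow[OF rep assms(2) sp assms(4)] False that by simp
    also have "\<dots> = character T \<tau>" by (rule chi)
    also have "\<dots> = character T (\<tau> ^^ j)" using char_conj_pow[OF rep assms(3) tp assms(4)] False that by simp
    also have "\<dots> = mat_trace (T \<tau> ^\<^sub>m j)"
      unfolding character_def T_pow[OF rep assms(3)] ..
    finally show ?thesis using tr_pow[OF as(2)] tr_pow[OF bs(2)] by simp
  qed
  have "mset as = mset bs"
  proof (rule multiset_eqI)
    fix \<omega> :: complex
    show "count (mset as) \<omega> = count (mset bs) \<omega>"
    proof (cases "\<omega> ^ p = 1")
      case True
      have "of_nat p * of_nat (count (mset as) \<omega>) = (of_nat p * of_nat (count (mset bs) \<omega>) :: complex)"
        unfolding count_formula[OF as(3) True p0, symmetric] count_formula[OF bs(3) True p0, symmetric]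
        using eq_pow by (intro sum.cong) auto
      thus ?thesis using p0 by simp
    next
      case False
      hence "\<omega> \<notin> set as" "\<omega> \<notin> set bs" using as(3) bs(3) by auto
      thus ?thesis by (metis count_mset_0_iff)
    qed
  qed
  hence "similar_mat (dmat as) (dmat bs)" by (rule dmat_perm_similar)
  thus "similar_mat (T \<sigma>) (T \<tau>)"
    using as(2) bs(2) by (meson similar_mat_sym similar_mat_trans)
qed

end
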